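(* Let $f=a_0+a_1x+\cdots+a_nx^n\in\mathbb{Z}[x]$ be a primitive polynomial. Suppose that $a_0=\pm p^k d$ for some positive integers $k$ and $d$ and a prime number $p$ with $p\nmid a_1 d$, and that every zero $\theta\in\mathbb{C}$ of $f$ satisfies $|\theta|>d$. Then $f$ is irreducible in $\mathbb{Z}[x]$.
   Context: A polynomial $a_0+a_1x+\cdots+a_nx^n\in\mathbb{Z}[x]$ is primitive if $\gcd(a_0,a_1,\ldots,a_n)=1$. *)

theory Defs
  imports "HOL-Computational_Algebra.Computational_Algebra" "HOL-Computational_Algebra.Polynomial_Factorial"
begin

end

theory Submission
  imports Defs
begin

lemma prod_mset_big:
  fixes A :: "complex multiset" and d :: real
  assumes "d \<ge> 1" "\<And>x. x \<in># A \<Longrightarrow> norm x > d" "A \<noteq> {#}"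
  shows "norm (\<Prod>x\<in>#A. - x) > d"
  using assms(2,3)
proof (induction A)
  case empty then show ?case by simp
next
  case (add x A)
  show ?case
  proof (cases "A = {#}")
    case True then show ?thesis using add by simp
  next
    case False
    then have "norm (\<Prod>x\<in>#A. - x) > d" using add by simp
    moreover have "norm x > d" using add by simp
    ultimately have "norm x * norm (\<Prod>x\<in>#A. - x) > d * 1"
      using assms(1) by (intro mult_strict_mono') auto
    then show ?thesis by (simp add: norm_mult)
  qed
qed

lemma const_coeff_big:
  fixes h :: "int poly" and d :: real
  assumes "d \<ge> 1" "degree h > 0"
    and "\<And>\<theta>::complex. poly (map_poly of_int h) \<theta> = 0 \<Longrightarrow> cmod \<theta> > d"
  shows "\<bar>coeff h 0\<bar> > d"
proof -
  define H where "H = (map_poly of_int h :: complex poly)"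
  have degH: "degree H = degree h" unfolding H_def by (simp add: degree_map_poly)
  then have "H \<noteq> 0" using assms(2) by auto
  then obtain A where A: "size A = degree H" "H = smult (lead_coeff H) (\<Prod>x\<in>#A. [:-x, 1:])"
    using alg_closed_imp_factorization by blast
  have lc: "lead_coeff H = of_int (lead_coeff h)" unfolding H_def degH[unfolded H_def]
    by (simp add: coeff_map_poly)
  have lc0: "lead_coeff h \<noteq> 0" using assms(2) by auto
  have c0: "coeff H 0 = of_int (coeff h 0)" unfolding H_def by (simp add: coeff_map_poly)
  have roots: "x \<in># A \<Longrightarrow> norm x > d" for x
  proof -
    assume "x \<in># A"
    then have "poly H x = 0" by (subst A(2)) (auto simp: poly_prod_mset prod_mset_zero_iff)
    then show ?thesis using assms(3) H_def by blast
  qed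
  have "A \<noteq> {#}" using A(1) degH assms(2) by auto
  then have big: "norm (\<Prod>x\<in>#A. - x) > d" using prod_mset_big[OF assms(1) roots] by blast
  have "coeff H 0 = poly H 0" by (simp add: poly_0_coeff_0)
  also have "\<dots> = lead_coeff H * (\<Prod>x\<in>#A. - x)"
    by (subst A(2)) (simp add: poly_prod_mset multiset.map_comp o_def)
  finally have "norm (coeff H 0) = \<bar>real_of_int (lead_coeff h)\<bar> * norm (\<Prod>x\<in>#A. - x)"
    by (simp add: lc norm_mult)
  moreover have "\<bar>real_of_int (lead_coeff h)\<bar> \<ge> 1" using lc0 by linarith
  moreover have "1 * norm (\<Prod>x\<in>#A. - x) \<le> \<bar>real_of_int (lead_coeff h)\<bar> * norm (\<Prod>x\<in>#A. - x)"
    using \<open>\<bar>real_of_int (lead_coeff h)\<bar> \<ge> 1\<close> by (intro mult_right_mono) auto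
  ultimately have "norm (coeff H 0) > d"
    using big by linarith
  then show ?thesis by (simp add: c0)
qed

lemma map_poly_of_int_mult:
  "map_poly (of_int :: int \<Rightarrow> 'a :: comm_ring_1) (p * q) = map_poly of_int p * map_poly of_int q"
  by (rule poly_eqI) (simp add: coeff_map_poly coeff_mult)

lemma key:
  fixes f g h :: "int poly" and p k d :: nat
  assumes "prime p" "d > 0" "f = g * h" "degree h > 0" "\<not> int p dvd coeff h 0"
    and "coeff f 0 = int (p ^ k * d) \<or> coeff f 0 = - int (p ^ k * d)"
    and "\<And>\<theta>::complex. poly (map_poly of_int f) \<theta> = 0 \<Longrightarrow> cmod \<theta> > real d"
  shows False
proof -
  have "coeff h 0 dvd coeff f 0" using assms(3) by (simp add: coeff_mult_0)
  then have d1: "coeff h 0 dvd int p ^ k * int d" using assms(6)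
    by (metis dvd_minus_iff of_nat_mult of_nat_power)
  have "coprime (coeff h 0) (int p)"
  proof -
    have "prime (int p)" using assms(1) by simp
    then show ?thesis using assms(5) by (metis coprime_commute prime_imp_coprime)
  qed
  then have "coprime (coeff h 0) (int p ^ k)" by simp
  then have "coeff h 0 dvd int d" using d1 coprime_dvd_mult_right_iff by blast
  then have "\<bar>coeff h 0\<bar> \<le> \<bar>int d\<bar>" by (rule dvd_imp_le_int[rotated]) (use assms(2) in auto)
  then have le: "\<bar>coeff h 0\<bar> \<le> int d" by simp
  have roots: "poly (map_poly of_int h) \<theta> = 0 \<Longrightarrow> cmod \<theta> > real d" for \<theta> :: complex
  proof -
    assume "poly (map_poly of_int h) \<theta> = 0"
    then have "poly (map_poly of_int f) \<theta> = 0" using assms(3)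
      by (simp add: map_poly_of_int_mult)
    then show ?thesis using assms(7) by blast
  qed
  have "\<bar>coeff h 0\<bar> > real d"
    using const_coeff_big[of "real d" h] roots assms(2,4) by simp
  then show False using le by linarith
qed

theorem theorem22:
  fixes f :: "int poly" and p k d :: nat
  assumes "content f = 1"
    and "prime p" and "k > 0" and "d > 0"
    and "coeff f 0 = int (p ^ k * d) \<or> coeff f 0 = - int (p ^ k * d)"
    and "\<not> int p dvd coeff f 1 * int d"
    and "\<And>\<theta>::complex. poly (map_poly of_int f) \<theta> = 0 \<Longrightarrow> cmod \<theta> > real d"
  shows "irreducible f"
proof (rule irreducibleI)
  have pk: "p ^ k * d \<ge> 2"
  proof -
    have "p \<ge> 2" using assms(2) prime_ge_2_nat by blast
    moreover have "p ^ 1 \<le> p ^ k" using assms(3) \<open>p \<ge> 2\<close> by (intro power_increasing) auto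
    moreover have "p ^ k \<le> p ^ k * d" using assms(4) by simp
    ultimately have "2 \<le> p ^ k" by simp
    moreover have "p ^ k \<le> p ^ k * d" using assms(4) by simp
    ultimately show ?thesis by linarith
  qed
  then have "int (p ^ k * d) \<ge> 2" by linarith
  then have a0: "\<bar>coeff f 0\<bar> \<ge> 2" using assms(5) by (auto simp del: of_nat_mult of_nat_power)
  then show "f \<noteq> 0" by auto
  show "\<not> f dvd 1"
  proof
    assume "f dvd 1"
    then obtain c where "f = [:c:]" "c dvd 1" by (auto simp: is_unit_poly_iff)
    then show False using a0 by auto
  qed
  fix a b assume ab: "f = a * b"
  show "a dvd 1 \<or> b dvd 1"
  proof (rule ccontr)
    assume nu: "\<not> (a dvd 1 \<or> b dvd 1)"
    have "content a * content b = 1" using ab assms(1) by (simp add: content_mult)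
    then have ca: "content a = 1" and cb: "content b = 1"
      using is_unit_content_iff dvd_triv_left dvd_triv_right by metis+
    have da: "degree a > 0"
    proof (rule ccontr)
      assume "\<not> degree a > 0"
      then obtain c where "a = [:c:]" by (metis degree_eq_zeroE neq0_conv)
      then show False using ca nu by (auto simp: is_unit_poly_iff)
    qed
    have db: "degree b > 0"
    proof (rule ccontr)
      assume "\<not> degree b > 0"
      then obtain c where "b = [:c:]" by (metis degree_eq_zeroE neq0_conv)
      then show False using cb nu by (auto simp: is_unit_poly_iff)
    qed
    have c1: "coeff f 1 = coeff a 0 * coeff b 1 + coeff a 1 * coeff b 0"
      using ab by (simp add: coeff_mult numeral_2_eq_2 atMost_Suc)
    show False
    proof (cases "int p dvd coeff b 0")
      case False
      then show False using key[OF assms(2,4) ab db False assms(5,7)] by blast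
    next
      case True
      have "\<not> int p dvd coeff a 0"
      proof
        assume "int p dvd coeff a 0"
        then have "int p dvd coeff f 1" using True c1 by simp
        then show False using assms(6) by simp
      qed
      moreover have "f = b * a" using ab by (simp add: mult.commute)
      ultimately show False using key[OF assms(2,4) _ da _ assms(5,7)] by blast
    qed
  qed
qed

end
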